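(* Define real sequences by the Gauss–Legendre iteration: $a_0 = 1$, $b_0 = 1/\sqrt{2}$, $s_0 = \tfrac14$, and for $n \ge 0$ \[ a_{n+1} = \frac{a_n+b_n}{2},\quad b_{n+1} = \sqrt{a_n b_n},\quad c_{n+1} = a_n - a_{n+1},\quad s_{n+1} = s_n - 2^n c_{n+1}^2 . \] Define also sequences by the Borwein quartic iteration: $y_0 = \sqrt{2}-1$, $z_0 = 2y_0^2$, and for $n \ge 0$ \[ y_{n+1} = \frac{1-(1-y_n^4)^{1/4}}{1+(1-y_n^4)^{1/4}},\qquad z_{n+1} = z_n(1+y_{n+1})^4 - 2^{2n+3}y_{n+1}(1+y_{n+1}+y_{n+1}^2), \] and set $\pi_n = 1/z_n$. Then for every $n\ge 0$, \[ \pi_n = \frac{a_{2n+1}^2}{s_{2n}}. \]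
   Context: All square roots and fourth roots are the positive real roots; all quantities are computed in exact real arithmetic. *)

theory Defs
  imports Complex_Main
begin

fun gl :: "nat \<Rightarrow> real \<times> real \<times> real" where
  "gl 0 = (1, 1 / sqrt 2, 1/4)"
| "gl (Suc n) = (let (a, b, s) = gl n; a' = (a + b) / 2; c' = a - a'
                 in (a', sqrt (a * b), s - 2 ^ n * c'^2))"

definition gl_a :: "nat \<Rightarrow> real" where "gl_a n = fst (gl n)"
definition gl_b :: "nat \<Rightarrow> real" where "gl_b n = fst (snd (gl n))"
definition gl_s :: "nat \<Rightarrow> real" where "gl_s n = snd (snd (gl n))"

fun borwein :: "nat \<Rightarrow> real \<times> real" where
  "borwein 0 = (sqrt 2 - 1, 2 * (sqrt 2 - 1)^2)"
| "borwein (Suc n) = (let (y, z) = borwein n;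
                          r = root 4 (1 - y^4);
                          y' = (1 - r) / (1 + r)
                      in (y', z * (1 + y')^4 - 2 ^ (2*n+3) * y' * (1 + y' + y'^2)))"

definition bw_y :: "nat \<Rightarrow> real" where "bw_y n = fst (borwein n)"
definition bw_z :: "nat \<Rightarrow> real" where "bw_z n = snd (borwein n)"
definition bw_pi :: "nat \<Rightarrow> real" where "bw_pi n = 1 / bw_z n"

end

theory Submission
  imports Defs
begin

lemma gl_rec:
  "gl_a (Suc n) = (gl_a n + gl_b n) / 2"
  "gl_b (Suc n) = sqrt (gl_a n * gl_b n)"
  "gl_s (Suc n) = gl_s n - 2 ^ n * (gl_a n - gl_a (Suc n))^2"
  by (simp_all add: gl_a_def gl_b_def gl_s_def Let_def split: prod.splits)

lemma gl0: "gl_a 0 = 1" "gl_b 0 = 1 / sqrt 2" "gl_s 0 = 1/4"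
  by (simp_all add: gl_a_def gl_b_def gl_s_def)

lemma bw_rec:
  "bw_y (Suc n) = (1 - root 4 (1 - bw_y n ^ 4)) / (1 + root 4 (1 - bw_y n ^ 4))"
  "bw_z (Suc n) = bw_z n * (1 + bw_y (Suc n))^4
      - 2 ^ (2*n+3) * bw_y (Suc n) * (1 + bw_y (Suc n) + bw_y (Suc n)^2)"
  by (simp_all add: bw_y_def bw_z_def Let_def split: prod.splits)

lemma bw0: "bw_y 0 = sqrt 2 - 1" "bw_z 0 = 2 * (sqrt 2 - 1)^2"
  by (simp_all add: bw_y_def bw_z_def)

lemma gl_pos: "gl_a n > 0 \<and> gl_b n > 0"
  by (induction n) (auto simp: gl_rec gl0)

lemma zstep:
  fixes u v S P :: real assumes "u > 0" "v > 0"
  shows "S/u^4 * (1 + (u-v)/(u+v))^4 - 8*P*((u-v)/(u+v))*(1 + (u-v)/(u+v) + ((u-v)/(u+v))^2)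
     = (S - P*(u^4-v^4) - 2*P*(u^2 - (u^2+v^2)/2)^2) / (((u^2+v^2)/2 + u*v)/2)^2"
proof -
  define w where "w = u+v"
  define t where "t = (u-v)/w"
  have p: "w > 0" using assms w_def by simp
  have uu: "u = w*(1+t)/2" and vv: "v = w*(1-t)/2" using p unfolding t_def w_def by (simp_all add: field_simps)
  have e1: "1 + t = 2*u/w" using p uu by (simp add: field_simps)
  have e2: "((u^2+v^2)/2 + u*v)/2 = w^2/4" unfolding w_def by (simp add: power2_eq_square algebra_simps)
  have "S/u^4 * (1 + t)^4 = S/u^4 * (2*u/w)^4" by (simp add: e1)
  also have "\<dots> = S * 16 / w^4" using assms p by (simp add: field_simps power4_eq_xxxx)
  finally have A: "S/u^4 * (1 + t)^4 = S * 16 / w^4" .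
  have B: "P*(u^4-v^4) + 2*P*(u^2 - (u^2+v^2)/2)^2 = P*w^4 * t * (1+t+t^2) / 2"
  proof -
    have h1: "u - v = t*w" using p unfolding t_def by simp
    have "u^2 - v^2 = (u-v)*(u+v)" by (simp add: power2_eq_square algebra_simps)
    then have d: "u^2 - v^2 = t*w^2" using h1 w_def by (simp add: power2_eq_square)
    have sm: "u^2 + v^2 = w^2*(1+t^2)/2"
    proof -
      have "2*(u^2+v^2) = (u+v)^2 + (u-v)^2" by (simp add: power2_eq_square algebra_simps)
      also have "\<dots> = w^2 + (t*w)^2" using h1 w_def by simp
      finally show ?thesis by (simp add: power2_eq_square algebra_simps)
    qed
    have "u^4 - v^4 = (u^2-v^2)*(u^2+v^2)" by (simp add: power2_eq_square power4_eq_xxxx algebra_simps)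
    also have "\<dots> = t*w^2 * (w^2*(1+t^2)/2)" using d sm by simp
    finally have f: "u^4 - v^4 = t*w^4*(1+t^2)/2" by (simp add: power2_eq_square power4_eq_xxxx)
    have g: "u^2 - (u^2+v^2)/2 = t*w^2/2" using d by (simp add: field_simps)
    show ?thesis unfolding f g by (simp add: power2_eq_square power4_eq_xxxx field_simps)
  qed
  have "(S - P*(u^4-v^4) - 2*P*(u^2 - (u^2+v^2)/2)^2) / (((u^2+v^2)/2 + u*v)/2)^2
      = (S - P*w^4 * t * (1+t+t^2) / 2) * 16 / w^4"
  proof -
    have n: "S - P*(u^4-v^4) - 2*P*(u^2 - (u^2+v^2)/2)^2 = S - P*w^4 * t * (1+t+t^2) / 2"
      using B by simp
    have d: "(((u^2+v^2)/2 + u*v)/2)^2 = w^4/16" unfolding e2 by (simp add: power_divide power_mult[symmetric])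
    show ?thesis unfolding n d by simp
  qed
  also have "\<dots> = S * 16 / w^4 - 8*P*t*(1+t+t^2)" using p by (simp add: field_simps)
  finally show ?thesis using A unfolding t_def[symmetric] w_def[symmetric] by simp
qed

lemma main:
  "bw_y n ^ 2 = (gl_a (2*n) - gl_b (2*n)) / (gl_a (2*n) + gl_b (2*n))
   \<and> bw_z n = gl_s (2*n) / gl_a (2*n+1) ^ 2"
proof (induction n)
  case 0
  have bq: "\<And>q::real. q > 0 \<Longrightarrow> q^2 = 2 \<Longrightarrow>
     (q - 1)^2 = (1 - 1/q)/(1 + 1/q) \<and> 2*(q-1)^2 = (1/4) / ((1 + 1/q)/2)^2"
  proof -
    fix q :: real assume q: "q > 0" "q^2 = 2"
    have "(q-1)*(q+1) = 1" using q by (simp add: algebra_simps power2_eq_square)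
    then show "(q - 1)^2 = (1 - 1/q)/(1 + 1/q) \<and> 2*(q-1)^2 = (1/4) / ((1 + 1/q)/2)^2"
      using q by (simp add: field_simps power2_eq_square)
  qed
  have "bw_y 0 ^ 2 = (1 - 1 / sqrt 2) / (1 + 1 / sqrt 2)"
    "bw_z 0 = (1/4) / ((1 + 1 / sqrt 2)/2) ^ 2"
    using bq[of "sqrt 2"] unfolding bw0 by auto
  then show ?case by (simp add: gl_rec gl0)
next
  case (Suc n)
  define A where "A = gl_a (2*n)"
  define B where "B = gl_b (2*n)"
  define S where "S = gl_s (2*n)"
  define P where "P = (2::real) ^ (2*n)"
  define u where "u = sqrt (gl_a (2*n+1))"
  define v where "v = sqrt (gl_b (2*n+1))"
  have Ap: "A > 0" "B > 0" using gl_pos A_def B_def by auto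
  have a1: "gl_a (2*n+1) = (A+B)/2" by (simp add: gl_rec A_def B_def)
  have b1: "gl_b (2*n+1) = sqrt (A*B)" by (simp add: gl_rec A_def B_def)
  have up: "u > 0" "v > 0" using gl_pos u_def v_def by auto
  have ua: "u^2 = gl_a (2*n+1)" using gl_pos[of "2*n+1"] u_def by (simp add: less_imp_le)
  have vb: "v^2 = gl_b (2*n+1)" using gl_pos[of "2*n+1"] v_def by (simp add: less_imp_le)
  have u2: "u^2 = (A+B)/2" using a1 ua by simp
  have v2: "v^2 = sqrt (A*B)" using b1 vb by simp
  have v4: "v^4 = A*B"
  proof -
    have "v^4 = (v^2)^2" by simp
    then show ?thesis using v2 Ap by simp
  qed
  have a2: "gl_a (2*n+2) = (u^2+v^2)/2"
    using gl_rec(1)[of "2*n+1"] ua vb by simp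
  have b2: "gl_b (2*n+2) = u*v"
    using gl_rec(2)[of "2*n+1"] gl_pos u_def v_def up by (simp add: real_sqrt_mult)
  have a3: "gl_a (2*n+3) = ((u^2+v^2)/2 + u*v)/2"
    using gl_rec(1)[of "2*n+2"] a2 b2 by (simp add: numeral_3_eq_3)
  have u4: "u^4 = ((A+B)/2)^2"
  proof -
    have "u^4 = (u^2)^2" by simp
    then show ?thesis using u2 by simp
  qed
  have ABp: "A + B > 0" using Ap by simp
  have s1: "gl_s (2*n+1) = S - P * (A - gl_a (2*n+1))^2"
    using gl_rec(3)[of "2*n"] by (simp add: S_def P_def A_def)
  have s2: "gl_s (2*n+2) = gl_s (2*n+1) - 2*P * (gl_a (2*n+1) - gl_a (2*n+2))^2"
    using gl_rec(3)[of "2*n+1"] by (simp add: P_def)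
  have IHy: "bw_y n ^ 2 = (A-B)/(A+B)" using Suc.IH by (simp add: A_def B_def)
  have g1: "gl_a (2*n+1) ^ 2 = u^4"
  proof -
    have "u^4 = (u^2)^2" by simp
    then show ?thesis using ua by simp
  qed
  have IHz: "bw_z n = S / u^4" using Suc.IH g1 by (simp add: S_def)
  have y4: "bw_y n ^ 4 = (bw_y n ^ 2)^2" by simp
  have "1 - bw_y n ^ 4 = 1 - ((A-B)/(A+B))^2" using y4 IHy by simp
  also have "\<dots> = 1 - (A-B)^2/(A+B)^2" by (simp only: power_divide)
  also have "\<dots> = ((A+B)^2 - (A-B)^2)/(A+B)^2" using ABp by (simp add: diff_divide_distrib)
  also have "\<dots> = 4*A*B/(A+B)^2" by (simp add: power2_eq_square algebra_simps)
  also have "\<dots> = v^4/u^4" unfolding v4 u4 by (simp add: power_divide)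
  also have "\<dots> = (v/u)^4" by (simp add: power_divide)
  finally have r: "root 4 (1 - bw_y n ^ 4) = v/u" using up by (simp add: real_root_power_cancel)
  have y1: "bw_y (Suc n) = (u-v)/(u+v)"
  proof -
    have "1 - v/u = (u-v)/u" "1 + v/u = (u+v)/u" using up by (simp_all add: field_simps)
    then show ?thesis using up by (simp add: bw_rec r)
  qed
  have "bw_y (Suc n) ^ 2 = (gl_a (2*n+2) - gl_b (2*n+2)) / (gl_a (2*n+2) + gl_b (2*n+2))"
  proof -
    have h1: "(u^2+v^2)/2 - u*v = (u-v)^2/2" and h2: "(u^2+v^2)/2 + u*v = (u+v)^2/2"
      by (simp_all add: power2_eq_square field_simps)
    show ?thesis unfolding y1 a2 b2 h1 h2 by (simp add: power_divide)
  qed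
  moreover have "bw_z (Suc n) = gl_s (2*n+2) / gl_a (2*n+3) ^ 2"
  proof -
    have AB: "(A - gl_a (2*n+1))^2 = u^4 - v^4"
    proof -
      have "(A - gl_a (2*n+1))^2 = ((A+B)/2)^2 - A*B" unfolding a1 by (simp add: power2_eq_square field_simps)
      then show ?thesis using u4 v4 by simp
    qed
    have g: "gl_a (2*n+1) - gl_a (2*n+2) = u^2 - (u^2+v^2)/2" using ua a2 by simp
    have e: "(2::real) ^ (2*n+3) = 8*P" by (simp add: P_def power_add)
    have "bw_z (Suc n) = S/u^4 * (1 + (u-v)/(u+v))^4 - 8*P*((u-v)/(u+v))*(1 + (u-v)/(u+v) + ((u-v)/(u+v))^2)"
      unfolding bw_rec(2) y1 IHz e by (simp only: mult.assoc)
    also have "\<dots> = (S - P*(u^4-v^4) - 2*P*(u^2 - (u^2+v^2)/2)^2) / (((u^2+v^2)/2 + u*v)/2)^2"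
      using up by (rule zstep)
    finally have fin: "bw_z (Suc n) = (S - P*(u^4-v^4) - 2*P*(u^2 - (u^2+v^2)/2)^2) / (((u^2+v^2)/2 + u*v)/2)^2" .
    show ?thesis unfolding s2 unfolding s1 AB g a3 by (rule fin)
  qed
  ultimately show ?case by (simp add: numeral_3_eq_3 numeral_2_eq_2)
qed

theorem corollary1:
  fixes n :: nat
  shows "bw_pi n = (gl_a (2*n+1))^2 / gl_s (2*n)"
  using main[of n] by (simp add: bw_pi_def)

end
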